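(* Let $w$ be a packed word of length $n$, viewed as a map $w:[n]\to\mathbb{N}$. Define the double poset $P_w=([n],\leq_1,\leq_2)$ by $$i\leq_1 j \iff (i\geq j \text{ and } w(i)\leq w(j)),\qquad i\leq_2 j\iff (i\leq j\text{ and } w(i)\leq w(j)).$$ Then $P_w$ is a weak plane poset, and its total quasi-order $\preceq$ (given by $i\preceq j\iff (i\leq_1 j$ or $i\leq_2 j)$) is the total quasi-order associated to $w$, namely $i\preceq j \iff w(i)\leq w(j)$.
   Context: A packed word of length $n$ is a word $w(1)\cdots w(n)$ of positive integers whose set of letters is $\{1,\dots,k\}$ for some $k$ (equivalently, a surjection $[n]\to[k]$). A double poset is a finite set with two partial orders $\leq_1,\leq_2$. A weak plane poset is a double poset such that (1) $x\leq_1 y$ and $x\leq_2 y$ imply $x=y$, and (2) the relation $x\preceq y \iff (x\leq_1 y$ or $x\leq_2 y)$ is a total quasi-order (reflexive, transitive, all elements comparable, not necessarily antisymmetric). Total quasi-orders on $[n]$ are in bijection with packed words of length $n$: to a total quasi-order one associates the packed word $w$ with $w(i)\leq w(j)\iff i\preceq j$ (the $r$-th equivalence class, in increasing order, gives the positions of the letter $r$). *)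

theory Defs
  imports Main
begin

text \<open>A packed word of length n: a map w on positions {1..n} whose set of letters
  is {1..k} for some k (values outside {1..n} are irrelevant).\<close>
definition packed_word :: "nat \<Rightarrow> (nat \<Rightarrow> nat) \<Rightarrow> bool" where
  "packed_word n w \<longleftrightarrow> (\<exists>k. w ` {1..n} = {1..k})"

definition double_poset :: "'a set \<Rightarrow> 'a rel \<Rightarrow> 'a rel \<Rightarrow> bool" where
  "double_poset A r1 r2 \<longleftrightarrow> partial_order_on A r1 \<and> partial_order_on A r2"

definition union_order :: "'a rel \<Rightarrow> 'a rel \<Rightarrow> 'a rel" where
  "union_order r1 r2 = r1 \<union> r2"

definition total_quasi_order_on :: "'a set \<Rightarrow> 'a rel \<Rightarrow> bool" where
  "total_quasi_order_on A r \<longleftrightarrow> preorder_on A r \<and> (\<forall>x\<in>A. \<forall>y\<in>A. (x, y) \<in> r \<or> (y, x) \<in> r)"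

definition weak_plane_poset :: "'a set \<Rightarrow> 'a rel \<Rightarrow> 'a rel \<Rightarrow> bool" where
  "weak_plane_poset A r1 r2 \<longleftrightarrow> double_poset A r1 r2
     \<and> (\<forall>x y. (x, y) \<in> r1 \<and> (x, y) \<in> r2 \<longrightarrow> x = y)
     \<and> total_quasi_order_on A (union_order r1 r2)"

definition Pw1 :: "nat \<Rightarrow> (nat \<Rightarrow> nat) \<Rightarrow> nat rel" where
  "Pw1 n w = {(i, j). i \<in> {1..n} \<and> j \<in> {1..n} \<and> i \<ge> j \<and> w i \<le> w j}"

definition Pw2 :: "nat \<Rightarrow> (nat \<Rightarrow> nat) \<Rightarrow> nat rel" where
  "Pw2 n w = {(i, j). i \<in> {1..n} \<and> j \<in> {1..n} \<and> i \<le> j \<and> w i \<le> w j}"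

definition word_quasi_order :: "nat \<Rightarrow> (nat \<Rightarrow> nat) \<Rightarrow> nat rel" where
  "word_quasi_order n w = {(i, j). i \<in> {1..n} \<and> j \<in> {1..n} \<and> w i \<le> w j}"

end

theory Submission
  imports Defs
begin

lemma U: "union_order (Pw1 n w) (Pw2 n w) = word_quasi_order n w"
  unfolding union_order_def Pw1_def Pw2_def word_quasi_order_def by auto

lemma P1: "partial_order_on {1..n} (Pw1 n w)"
  unfolding partial_order_on_def preorder_on_def refl_on_def trans_def antisym_def Pw1_def
  by auto

lemma P2: "partial_order_on {1..n} (Pw2 n w)"
  unfolding partial_order_on_def preorder_on_def refl_on_def trans_def antisym_def Pw2_def
  by auto

lemma T: "total_quasi_order_on {1..n} (word_quasi_order n w)"
  unfolding total_quasi_order_on_def preorder_on_def refl_on_def trans_def word_quasi_order_def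
  by auto

theorem mainTheorem2:
  fixes n :: nat and w :: "nat \<Rightarrow> nat"
  assumes "packed_word n w"
  shows "weak_plane_poset {1..n} (Pw1 n w) (Pw2 n w)
    \<and> union_order (Pw1 n w) (Pw2 n w) = word_quasi_order n w"
  unfolding weak_plane_poset_def double_poset_def U
  using P1 P2 T by (auto simp: Pw1_def Pw2_def)

end
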